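(* Let $u\geq 1$, $a=(-u,-1)$, $b=(u,1)$, $s(x)=-x/u$, and fix $x<-u$. Then for all $p\neq 0$ close enough to zero, whenever $y_p>1$ and $(x,y_p)\in B_p(a,b)$, we have $y_p<2\,s(x)+3$.
   Context: For $p\neq 0$ and $(x,y)\in\mathbb{R}^2$ let $L_p((x,y))=(|x|^p+|y|^p)^{1/p}$; for $p<0$ this is extended by setting $L_p((x,y))=0$ whenever $x=0$ or $y=0$. The bisector is $B_p(a,b)=\{q\in\mathbb{R}^2: L_p(a-q)=L_p(b-q)\}$. *)

theory Defs
  imports Complex_Main
begin

definition Lp :: "real \<Rightarrow> real \<times> real \<Rightarrow> real" where
  "Lp p q = (if p < 0 \<and> (fst q = 0 \<or> snd q = 0) then 0
             else (\<bar>fst q\<bar> powr p + \<bar>snd q\<bar> powr p) powr (1 / p))"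

definition bisector :: "real \<Rightarrow> real \<times> real \<Rightarrow> real \<times> real \<Rightarrow> (real \<times> real) set" where
  "bisector p a b = {q. Lp p (fst a - fst q, snd a - snd q) = Lp p (fst b - fst q, snd b - snd q)}"

end

theory Submission
  imports Defs
begin

lemma h_mono:
  fixes p Y y :: real
  assumes "1 < Y" "Y \<le> y" "p < 1" "p \<noteq> 0"
  shows "((y+1) powr p - (y-1) powr p)/p \<le> ((Y+1) powr p - (Y-1) powr p)/p"
proof -
  let ?h = "\<lambda>t::real. ((t+1) powr p - (t-1) powr p)/p"
  have "?h y \<le> ?h Y"
  proof (rule DERIV_nonpos_imp_nonincreasing[OF assms(2)])
    fix t assume t: "Y \<le> t" "t \<le> y"
    hence t1: "t > 1" using assms by simp
    have d1: "((\<lambda>t. (t+1) powr p) has_real_derivative p * (t+1) powr (p-1)) (at t)"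
      proof -
      have A: "((\<lambda>z. z powr p) has_real_derivative p * (t+1) powr (p-1)) (at (t+1))"
        using has_real_derivative_powr[of "t+1" p] t1 by simp
      have B: "((\<lambda>t. t+1) has_real_derivative 1) (at t)" by (auto intro!: derivative_eq_intros)
      show ?thesis using DERIV_chain2[OF A B] by simp
    qed
    have d2: "((\<lambda>t. (t-1) powr p) has_real_derivative p * (t-1) powr (p-1)) (at t)"
      proof -
      have A: "((\<lambda>z. z powr p) has_real_derivative p * (t-1) powr (p-1)) (at (t-1))"
        using has_real_derivative_powr[of "t-1" p] t1 by simp
      have B: "((\<lambda>t. t-1) has_real_derivative 1) (at t)" by (auto intro!: derivative_eq_intros)
      show ?thesis using DERIV_chain2[OF A B] by simp
    qed
    have "(?h has_real_derivative (p * (t+1) powr (p-1) - p * (t-1) powr (p-1)) / p) (at t)"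
      by (intro DERIV_cdivide DERIV_diff d1 d2)
    moreover have "(p * (t+1) powr (p-1) - p * (t-1) powr (p-1)) / p = (t+1) powr (p-1) - (t-1) powr (p-1)"
      using assms(4) by (simp add: field_simps)
    moreover have "(t+1) powr (p-1) \<le> (t-1) powr (p-1)"
      using powr_less_mono2_neg[of "p-1" "t-1" "t+1"] t1 assms(3) by simp
    ultimately show "\<exists>d. (?h has_real_derivative d) (at t) \<and> d \<le> 0" by auto
  qed
  thus ?thesis by simp
qed

lemma powr_deriv0:
  fixes c :: real
  assumes "c > 0"
  shows "((\<lambda>p. c powr p) has_real_derivative ln c) (at 0)"
proof -
  have "((\<lambda>p. exp (p * ln c)) has_real_derivative exp (0 * ln c) * (1 * ln c)) (at 0)"
    by (auto intro!: derivative_eq_intros)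
  moreover have "(\<lambda>p. c powr p) = (\<lambda>p. exp (p * ln c))"
    using assms by (simp add: powr_def mult.commute)
  ultimately show ?thesis by simp
qed

theorem lemma7:
  fixes u x :: real
  assumes "u \<ge> 1" and "x < - u"
  shows "\<exists>\<delta>>0. \<forall>p. p \<noteq> 0 \<and> \<bar>p\<bar> < \<delta> \<longrightarrow>
           (\<forall>y. y > 1 \<and> (x, y) \<in> bisector p (- u, - 1) (u, 1) \<longrightarrow> y < 2 * (- x / u) + 3)"
proof -
  define \<alpha> where "\<alpha> = - u - x"
  define \<beta> where "\<beta> = u - x"
  define Y where "Y = 2 * (- x / u) + 3"
  have a0: "\<alpha> > 0" and b0: "\<beta> > 0" using assms by (auto simp: \<alpha>_def \<beta>_def)
  have s0: "- x / u > 0" using assms by (simp add: divide_neg_pos)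
  have Y1: "Y > 1" using s0 by (simp add: Y_def)
  define G where "G = (\<lambda>p::real. \<beta> powr p - \<alpha> powr p - (Y+1) powr p + (Y-1) powr p)"
  define L where "L = ln \<beta> - ln \<alpha> - ln (Y+1) + ln (Y-1)"
  have G0: "G 0 = 0" using a0 b0 Y1 by (simp add: G_def)
  have "(G has_real_derivative L) (at 0)"
    unfolding G_def L_def
    by (intro DERIV_add DERIV_diff powr_deriv0) (use a0 b0 Y1 in auto)
  hence lim: "((\<lambda>p. (G p - G 0) / (p - 0)) \<longlongrightarrow> L) (at 0)"
    using has_field_derivative_iff by blast
  have Lpos: "L > 0"
  proof -
    have "\<alpha> * (Y+1) < \<beta> * (Y-1)"
    proof -
      have "u * Y = -2*x + 3*u" using assms by (simp add: Y_def field_simps)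
      thus ?thesis using assms by (simp add: \<alpha>_def \<beta>_def algebra_simps)
    qed
    hence "ln (\<alpha> * (Y+1)) < ln (\<beta> * (Y-1))"
      using a0 b0 Y1 by (intro ln_less_cancel_iff[THEN iffD2]) auto
    thus ?thesis using a0 b0 Y1 by (simp add: L_def ln_mult)
  qed
  have ev: "eventually (\<lambda>p. G p / p > 0 \<and> p < 1) (at 0)"
  proof (rule eventually_conj)
    show "eventually (\<lambda>p. G p / p > 0) (at 0)"
      using order_tendstoD(1)[OF lim Lpos] by (simp add: G0)
    show "eventually (\<lambda>p::real. p < 1) (at 0)"
      by (rule order_tendstoD(2)[OF tendsto_ident_at]) simp
  qed
  then obtain d where d: "d > 0" "\<And>p. p \<noteq> 0 \<Longrightarrow> dist p 0 < d \<Longrightarrow> G p / p > 0 \<and> p < 1"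
    unfolding eventually_at by auto
  show ?thesis
  proof (intro exI[of _ d] conjI allI impI d(1))
    fix p y assume p: "p \<noteq> 0 \<and> \<bar>p\<bar> < d" and yb: "1 < y \<and> (x, y) \<in> bisector p (- u, - 1) (u, 1)"
    have Gp: "G p / p > 0" and p1: "p < 1" using d(2)[of p] p by auto
    show "y < 2 * (- x / u) + 3"
    proof (rule ccontr)
      assume "\<not> ?thesis"
      hence yY: "Y \<le> y" by (simp add: Y_def)
      have y1: "y > 1" using yb by simp
      have "Lp p (- u - x, - 1 - y) = Lp p (u - x, 1 - y)"
        using yb by (simp add: bisector_def)
      hence "(\<alpha> powr p + (y+1) powr p) powr (1/p) = (\<beta> powr p + (y-1) powr p) powr (1/p)"
        using a0 b0 y1 by (simp add: Lp_def \<alpha>_def \<beta>_def abs_of_pos abs_of_neg add.commute)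
      hence "((\<alpha> powr p + (y+1) powr p) powr (1/p)) powr p = ((\<beta> powr p + (y-1) powr p) powr (1/p)) powr p"
        by simp
      hence eq: "\<alpha> powr p + (y+1) powr p = \<beta> powr p + (y-1) powr p"
        using p by (simp add: powr_powr)
      have "((y+1) powr p - (y-1) powr p)/p \<le> ((Y+1) powr p - (Y-1) powr p)/p"
        using h_mono[OF Y1 yY p1] p by simp
      moreover have "((y+1) powr p - (y-1) powr p)/p = (\<beta> powr p - \<alpha> powr p)/p"
        using eq by (simp add: algebra_simps)
      moreover have "G p / p = (\<beta> powr p - \<alpha> powr p)/p - ((Y+1) powr p - (Y-1) powr p)/p"
        by (simp add: G_def diff_divide_distrib add_divide_distrib)
      ultimately show False using Gp by linarith
    qed
  qed
qed

end
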